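(* Let $p, p' > 1$ be real numbers with $\frac{1}{p}+\frac{1}{p'}=1$, and let $\mu,\nu$ be probability distributions on $S$ with $\nu(s)>0$ for all $s\in S$. For every joint stationary strategy $\boldsymbol{\pi}=(\pi^i,\boldsymbol\pi^{-i})$, every player $i\in\{1,\dots,N\}$ and every $v^i:S\to\mathbb{R}$, letting $\pi^i_*$ be a stationary best response of player $i$ to $\boldsymbol\pi^{-i}$ (i.e. $v^i_{\pi^i_*,\boldsymbol\pi^{-i}}=v^{*i}_{\boldsymbol\pi^{-i}}$, the fixed point of $\mathcal T^{*i}_{\boldsymbol\pi^{-i}}$), $$\big\|v^i_{\pi^i_*,\boldsymbol\pi^{-i}}-v^i_{\pi^i,\boldsymbol\pi^{-i}}\big\|_{\mu,p}\le \frac{1}{1-\gamma}\Big(C_\infty(\mu,\nu,(\pi^i_*,\boldsymbol\pi^{-i}))^{p'/p}+C_\infty(\mu,\nu,(\pi^i,\boldsymbol\pi^{-i}))^{p'/p}\Big)^{1/p'}\Big[\big\|\mathcal T^{*i}_{\boldsymbol\pi^{-i}}v^i-v^i\big\|_{\nu,p}^p+\big\|\mathcal T^i_{\boldsymbol\pi}v^i-v^i\big\|_{\nu,p}^p\Big]^{1/p}.$$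
   Context: An $N$-player Markov game has a finite state space $S$, finite nonempty action sets $A^i(s)$ for each player $i\in\{1,\dots,N\}$ and state $s$, rewards $r^i(s,\mathbf a)\in\mathbb{R}$ for joint actions $\mathbf a=(a^1,\dots,a^N)$, a transition kernel $p(s'|s,\mathbf a)$, and a discount factor $\gamma\in[0,1)$. We write $\mathbf a=(a^i,\mathbf a^{-i})$ where $\mathbf a^{-i}$ is the joint action of all players other than $i$. A stationary strategy $\pi^i$ of player $i$ assigns to each $s$ a probability distribution $\pi^i(\cdot|s)$ on $A^i(s)$; a joint strategy is $\boldsymbol\pi=(\pi^1,\dots,\pi^N)=(\pi^i,\boldsymbol\pi^{-i})$, with actions drawn independently across players. Define $\mathcal P_{\boldsymbol\pi}(s'|s)=E_{\mathbf a\sim\boldsymbol\pi(\cdot|s)}[p(s'|s,\mathbf a)]$, $r^i_{\boldsymbol\pi}(s)=E_{\mathbf a\sim\boldsymbol\pi(\cdot|s)}[r^i(s,\mathbf a)]$, $\mathcal P_{\boldsymbol\pi^{-i}}(s'|s,a^i)=E_{\mathbf a^{-i}\sim\boldsymbol\pi^{-i}(\cdot|s)}[p(s'|s,a^i,\mathbf a^{-i})]$, $r^i_{\boldsymbol\pi^{-i}}(s,a^i)=E_{\mathbf a^{-i}\sim\boldsymbol\pi^{-i}(\cdot|s)}[r^i(s,a^i,\mathbf a^{-i})]$. The value of $\boldsymbol\pi$ for player $i$ is $v^i_{\boldsymbol\pi}=(\mathcal I-\gamma\mathcal P_{\boldsymbol\pi})^{-1}r^i_{\boldsymbol\pi}$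 (vectors/matrices indexed by $S$, $\mathcal I$ the identity). The best-response value is $v^{*i}_{\boldsymbol\pi^{-i}}=\max_{\tilde\pi^i} v^i_{\tilde\pi^i,\boldsymbol\pi^{-i}}$ (pointwise maximum over stationary strategies of player $i$). For $v:S\to\mathbb R$, the Bellman operators are $\mathcal T^i_{\boldsymbol\pi}v(s)=r^i_{\boldsymbol\pi}(s)+\gamma\sum_{s'}\mathcal P_{\boldsymbol\pi}(s'|s)v(s')$ and $\mathcal T^{*i}_{\boldsymbol\pi^{-i}}v(s)=\max_{a^i\in A^i(s)}\big[r^i_{\boldsymbol\pi^{-i}}(s,a^i)+\gamma\sum_{s'}\mathcal P_{\boldsymbol\pi^{-i}}(s'|s,a^i)v(s')\big]$. For a distribution $\mu$ on $S$ and $f:S\to\mathbb R$, $\|f\|_{\mu,p}=(\sum_{s}\mu(s)|f(s)|^p)^{1/p}$. The concentrability coefficient of a joint strategy $\boldsymbol\pi$ is $C_\infty(\mu,\nu,\boldsymbol\pi)=\max_{s\in S}\frac{[(1-\gamma)\mu^T(\mathcal I-\gamma\mathcal P_{\boldsymbol\pi})^{-1}](s)}{\nu(s)}$ (the sup-norm of the Radon–Nikodym derivative of the distribution $(1-\gamma)\mu^T(\mathcal I-\gamma\mathcal P_{\boldsymbol\pi})^{-1}$ with respect to $\nu$). *)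

theory Defs
  imports "HOL-Analysis.Analysis" "HOL-Probability.Product_PMF"
begin

(* Players: finite type 'p; states: finite type 's; actions: type 'a with
   per-player, per-state action sets A i s.
   A joint strategy: 'p => 's => 'a pmf; actions are drawn independently. *)

definition strategy :: "('p \<Rightarrow> 's \<Rightarrow> 'a set) \<Rightarrow> 'p \<Rightarrow> ('s \<Rightarrow> 'a pmf) \<Rightarrow> bool" where
  "strategy A i \<sigma> \<longleftrightarrow> (\<forall>s. set_pmf (\<sigma> s) \<subseteq> A i s)"

definition joint_strategy :: "('p \<Rightarrow> 's \<Rightarrow> 'a set) \<Rightarrow> ('p \<Rightarrow> 's \<Rightarrow> 'a pmf) \<Rightarrow> bool" where
  "joint_strategy A \<pi> \<longleftrightarrow> (\<forall>i. strategy A i (\<pi> i))"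

definition joint :: "('p::finite \<Rightarrow> 's \<Rightarrow> 'a pmf) \<Rightarrow> 's \<Rightarrow> ('p \<Rightarrow> 'a) pmf" where
  "joint \<pi> s = Pi_pmf UNIV undefined (\<lambda>j. \<pi> j s)"

definition Pmat :: "('s::finite \<Rightarrow> ('p::finite \<Rightarrow> 'a) \<Rightarrow> 's pmf) \<Rightarrow> ('p \<Rightarrow> 's \<Rightarrow> 'a pmf) \<Rightarrow> real^'s^'s" where
  "Pmat K \<pi> = (\<chi> s s'. measure_pmf.expectation (joint \<pi> s) (\<lambda>a. pmf (K s a) s'))"

definition rvec :: "('p \<Rightarrow> 's::finite \<Rightarrow> ('p::finite \<Rightarrow> 'a) \<Rightarrow> real) \<Rightarrow> 'p \<Rightarrow> ('p \<Rightarrow> 's \<Rightarrow> 'a pmf) \<Rightarrow> real^'s" where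
  "rvec r i \<pi> = (\<chi> s. measure_pmf.expectation (joint \<pi> s) (\<lambda>a. r i s a))"

definition val :: "('s::finite \<Rightarrow> ('p::finite \<Rightarrow> 'a) \<Rightarrow> 's pmf) \<Rightarrow> ('p \<Rightarrow> 's \<Rightarrow> ('p \<Rightarrow> 'a) \<Rightarrow> real) \<Rightarrow> real
    \<Rightarrow> 'p \<Rightarrow> ('p \<Rightarrow> 's \<Rightarrow> 'a pmf) \<Rightarrow> real^'s" where
  "val K r \<gamma> i \<pi> = matrix_inv (mat 1 - \<gamma> *\<^sub>R Pmat K \<pi>) *v rvec r i \<pi>"

definition br_val :: "('s::finite \<Rightarrow> ('p::finite \<Rightarrow> 'a) \<Rightarrow> 's pmf) \<Rightarrow> ('p \<Rightarrow> 's \<Rightarrow> ('p \<Rightarrow> 'a) \<Rightarrow> real) \<Rightarrow> real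
    \<Rightarrow> ('p \<Rightarrow> 's \<Rightarrow> 'a set) \<Rightarrow> 'p \<Rightarrow> ('p \<Rightarrow> 's \<Rightarrow> 'a pmf) \<Rightarrow> real^'s" where
  "br_val K r \<gamma> A i \<pi> = (\<chi> s. SUP \<sigma>\<in>{\<sigma>. strategy A i \<sigma>}. val K r \<gamma> i (\<pi>(i := \<sigma>)) $ s)"

definition r_mi :: "('p \<Rightarrow> 's::finite \<Rightarrow> ('p::finite \<Rightarrow> 'a) \<Rightarrow> real) \<Rightarrow> 'p \<Rightarrow> ('p \<Rightarrow> 's \<Rightarrow> 'a pmf) \<Rightarrow> 's \<Rightarrow> 'a \<Rightarrow> real" where
  "r_mi r i \<pi> s a = measure_pmf.expectation (joint (\<pi>(i := (\<lambda>_. return_pmf a))) s) (\<lambda>b. r i s b)"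

definition P_mi :: "('s::finite \<Rightarrow> ('p::finite \<Rightarrow> 'a) \<Rightarrow> 's pmf) \<Rightarrow> 'p \<Rightarrow> ('p \<Rightarrow> 's \<Rightarrow> 'a pmf) \<Rightarrow> 's \<Rightarrow> 'a \<Rightarrow> 's \<Rightarrow> real" where
  "P_mi K i \<pi> s a s' = measure_pmf.expectation (joint (\<pi>(i := (\<lambda>_. return_pmf a))) s) (\<lambda>b. pmf (K s b) s')"

definition T_op :: "('s::finite \<Rightarrow> ('p::finite \<Rightarrow> 'a) \<Rightarrow> 's pmf) \<Rightarrow> ('p \<Rightarrow> 's \<Rightarrow> ('p \<Rightarrow> 'a) \<Rightarrow> real) \<Rightarrow> real
    \<Rightarrow> 'p \<Rightarrow> ('p \<Rightarrow> 's \<Rightarrow> 'a pmf) \<Rightarrow> real^'s \<Rightarrow> real^'s" where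
  "T_op K r \<gamma> i \<pi> v = (\<chi> s. rvec r i \<pi> $ s + \<gamma> * (\<Sum>s'\<in>UNIV. Pmat K \<pi> $ s $ s' * v $ s'))"

(* Bellman optimality operator T^{*i}_{pi^{-i}} (only pi^{-i} matters) *)
definition Tstar_op :: "('s::finite \<Rightarrow> ('p::finite \<Rightarrow> 'a) \<Rightarrow> 's pmf) \<Rightarrow> ('p \<Rightarrow> 's \<Rightarrow> ('p \<Rightarrow> 'a) \<Rightarrow> real) \<Rightarrow> real
    \<Rightarrow> ('p \<Rightarrow> 's \<Rightarrow> 'a set) \<Rightarrow> 'p \<Rightarrow> ('p \<Rightarrow> 's \<Rightarrow> 'a pmf) \<Rightarrow> real^'s \<Rightarrow> real^'s" where
  "Tstar_op K r \<gamma> A i \<pi> v = (\<chi> s. Max ((\<lambda>a. r_mi r i \<pi> s a + \<gamma> * (\<Sum>s'\<in>UNIV. P_mi K i \<pi> s a s' * v $ s')) ` A i s))"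

definition lpnorm :: "'s::finite pmf \<Rightarrow> real \<Rightarrow> real^'s \<Rightarrow> real" where
  "lpnorm \<mu> p f = (\<Sum>s\<in>UNIV. pmf \<mu> s * \<bar>f $ s\<bar> powr p) powr (1 / p)"

definition conc :: "('s::finite \<Rightarrow> ('p::finite \<Rightarrow> 'a) \<Rightarrow> 's pmf) \<Rightarrow> real \<Rightarrow> 's pmf \<Rightarrow> 's pmf
    \<Rightarrow> ('p \<Rightarrow> 's \<Rightarrow> 'a pmf) \<Rightarrow> real" where
  "conc K \<gamma> \<mu> \<nu> \<pi> = Max (range (\<lambda>s.
      (((1 - \<gamma>) *\<^sub>R ((\<chi> t. pmf \<mu> t) v* matrix_inv (mat 1 - \<gamma> *\<^sub>R Pmat K \<pi>))) $ s) / pmf \<nu> s))"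

end

theory Submission
  imports Defs
begin


definition stoch :: "real^'s^'s \<Rightarrow> bool" where
  "stoch P \<longleftrightarrow> (\<forall>s t. 0 \<le> P$s$t) \<and> (\<forall>s. (\<Sum>t\<in>UNIV. P$s$t) = 1)"

lemma IP_apply:
  fixes P :: "real^'s::finite^'s"
  shows "((mat 1 - \<gamma> *\<^sub>R P) *v y) $ s = y$s - \<gamma> * (\<Sum>t\<in>UNIV. P$s$t * y$t)"
proof -
  have e: "(mat 1 - \<gamma> *\<^sub>R P) $ s $ t = (if s = t then 1 else 0) - \<gamma> * P$s$t" for t
    by (simp add: mat_def)
  have "((mat 1 - \<gamma> *\<^sub>R P) *v y) $ s = (\<Sum>t\<in>UNIV. ((if s = t then 1 else 0) - \<gamma> * P$s$t) * y$t)"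
    by (simp only: matrix_vector_mult_def vec_lambda_beta e)
  also have "\<dots> = (\<Sum>t\<in>UNIV. (if s = t then 1 else 0) * y$t) - (\<Sum>t\<in>UNIV. \<gamma> * (P$s$t * y$t))"
    by (simp only: left_diff_distrib sum_subtractf mult.assoc)
  also have "(\<Sum>t\<in>UNIV. (if s = t then 1 else 0) * y$t) = y$s"
    by (simp add: if_distrib[of "\<lambda>a. a * _"] cong: if_cong)
  also have "(\<Sum>t\<in>UNIV. \<gamma> * (P$s$t * y$t)) = \<gamma> * (\<Sum>t\<in>UNIV. P$s$t * y$t)"
    by (simp only: sum_distrib_left)
  finally show ?thesis .
qed

lemma ex_argmax:
  fixes f :: "'s::finite \<Rightarrow> real"
  shows "\<exists>m. \<forall>t. f t \<le> f m"
proof -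
  have "Max (range f) \<in> range f" by (intro Max_in) auto
  then obtain m where "Max (range f) = f m" by (metis imageE)
  then have "\<forall>t. f t \<le> f m" using Max_ge[of "range f"] by auto
  then show ?thesis by blast
qed

lemma ex_argmin:
  fixes f :: "'s::finite \<Rightarrow> real"
  shows "\<exists>m. \<forall>t. f m \<le> f t"
  using ex_argmax[of "\<lambda>t. - f t"] by force

lemma IP_ker:
  fixes P :: "real^'s::finite^'s"
  assumes P: "stoch P" and g: "0 \<le> \<gamma>" "\<gamma> < 1"
    and x: "(mat 1 - \<gamma> *\<^sub>R P) *v x = 0"
  shows "x = 0"
proof -
  obtain m where m: "\<And>t. \<bar>x$t\<bar> \<le> \<bar>x$m\<bar>"
    using ex_argmax[of "\<lambda>t. \<bar>x$t\<bar>"] by blast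
  have eq: "x$m = \<gamma> * (\<Sum>t\<in>UNIV. P$m$t * x$t)"
    using IP_apply[of \<gamma> P x m] x by simp
  have "\<bar>\<Sum>t\<in>UNIV. P$m$t * x$t\<bar> \<le> (\<Sum>t\<in>UNIV. P$m$t * \<bar>x$m\<bar>)"
  proof -
    have "\<bar>\<Sum>t\<in>UNIV. P$m$t * x$t\<bar> \<le> (\<Sum>t\<in>UNIV. \<bar>P$m$t * x$t\<bar>)" by (rule sum_abs)
    also have "\<dots> \<le> (\<Sum>t\<in>UNIV. P$m$t * \<bar>x$m\<bar>)"
      using P m by (intro sum_mono) (auto simp: stoch_def abs_mult intro: mult_left_mono)
    finally show ?thesis .
  qed
  also have "\<dots> = \<bar>x$m\<bar>" using P by (simp add: stoch_def sum_distrib_right[symmetric])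
  finally have "\<bar>x$m\<bar> \<le> \<gamma> * \<bar>x$m\<bar>" using eq g by (simp add: abs_mult mult_left_mono)
  then have "\<bar>x$m\<bar> = 0" using g
    by (metis abs_ge_zero antisym mult_le_cancel_right1 not_le)
  then show ?thesis using m by (simp add: vec_eq_iff)
qed

lemma IP_inv:
  fixes P :: "real^'s::finite^'s"
  assumes P: "stoch P" and g: "0 \<le> \<gamma>" "\<gamma> < 1"
  shows "(mat 1 - \<gamma> *\<^sub>R P) ** matrix_inv (mat 1 - \<gamma> *\<^sub>R P) = mat 1 \<and>
         matrix_inv (mat 1 - \<gamma> *\<^sub>R P) ** (mat 1 - \<gamma> *\<^sub>R P) = mat 1"
proof -
  have "\<exists>B. B ** (mat 1 - \<gamma> *\<^sub>R P) = mat 1"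
    using IP_ker[OF P g] by (subst matrix_left_invertible_ker) blast
  then have "invertible (mat 1 - \<gamma> *\<^sub>R P)" by (simp add: invertible_left_inverse)
  then show ?thesis unfolding matrix_inv_def invertible_def by (rule someI_ex)
qed

lemma IP_inv1:
  fixes P :: "real^'s::finite^'s"
  assumes P: "stoch P" and g: "0 \<le> \<gamma>" "\<gamma> < 1"
  shows "(mat 1 - \<gamma> *\<^sub>R P) *v (matrix_inv (mat 1 - \<gamma> *\<^sub>R P) *v x) = x"
    and "matrix_inv (mat 1 - \<gamma> *\<^sub>R P) *v ((mat 1 - \<gamma> *\<^sub>R P) *v x) = x"
  using IP_inv[OF assms] by (simp_all add: matrix_vector_mul_assoc)

lemma IP_pos:
  fixes P :: "real^'s::finite^'s"
  assumes P: "stoch P" and g: "0 \<le> \<gamma>" "\<gamma> < 1"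
    and y: "\<And>s. 0 \<le> ((mat 1 - \<gamma> *\<^sub>R P) *v x) $ s"
  shows "0 \<le> x $ t"
proof -
  obtain m where m: "\<And>t. x$m \<le> x$t"
    using ex_argmin[of "\<lambda>t. x$t"] by blast
  have "(\<Sum>t\<in>UNIV. P$m$t * x$t) \<ge> (\<Sum>t\<in>UNIV. P$m$t * x$m)"
    using P m by (intro sum_mono) (auto simp: stoch_def intro: mult_left_mono)
  also have "(\<Sum>t\<in>UNIV. P$m$t * x$m) = x$m" using P by (simp add: stoch_def sum_distrib_right[symmetric])
  finally have "\<gamma> * x$m \<le> \<gamma> * (\<Sum>t\<in>UNIV. P$m$t * x$t)" using g by (simp add: mult_left_mono)
  then have "0 \<le> x$m - \<gamma> * x$m" using y[of m] IP_apply[of \<gamma> P x m] by linarith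
  then have "0 \<le> (1 - \<gamma>) * x$m" by (simp add: algebra_simps)
  then have "0 \<le> x$m" using g by (simp add: zero_le_mult_iff)
  then show ?thesis using m[of t] by linarith
qed

lemma M_pos:
  fixes P :: "real^'s::finite^'s"
  assumes P: "stoch P" and g: "0 \<le> \<gamma>" "\<gamma> < 1"
    and x: "\<And>s. 0 \<le> x $ s"
  shows "0 \<le> (matrix_inv (mat 1 - \<gamma> *\<^sub>R P) *v x) $ t"
  by (rule IP_pos[OF P g]) (simp add: IP_inv1[OF P g] x)

lemma M_mono:
  fixes P :: "real^'s::finite^'s"
  assumes P: "stoch P" and g: "0 \<le> \<gamma>" "\<gamma> < 1"
    and x: "\<And>s. x $ s \<le> y $ s"
  shows "(matrix_inv (mat 1 - \<gamma> *\<^sub>R P) *v x) $ t \<le> (matrix_inv (mat 1 - \<gamma> *\<^sub>R P) *v y) $ t"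
  using M_pos[OF P g, of "y - x" t] x by (simp add: matrix_vector_mult_diff_distrib)

lemma M_const:
  fixes P :: "real^'s::finite^'s"
  assumes P: "stoch P" and g: "0 \<le> \<gamma>" "\<gamma> < 1"
  shows "matrix_inv (mat 1 - \<gamma> *\<^sub>R P) *v (\<chi> t. c) = (\<chi> t. c / (1 - \<gamma>))"
proof -
  have "(mat 1 - \<gamma> *\<^sub>R P) *v (\<chi> t. c / (1 - \<gamma>)) = (\<chi> t. c)"
  proof -
    have hh: "(\<Sum>t\<in>UNIV. P$i$t * (c / (1 - \<gamma>))) = c / (1 - \<gamma>)" for i
    proof -
      have "(\<Sum>t\<in>UNIV. P$i$t * (c / (1 - \<gamma>))) = (\<Sum>t\<in>UNIV. P$i$t) * (c / (1 - \<gamma>))"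
        by (simp only: sum_distrib_right)
      also have "\<dots> = c / (1 - \<gamma>)" using P by (simp add: stoch_def)
      finally show ?thesis .
    qed
    have "((mat 1 - \<gamma> *\<^sub>R P) *v (\<chi> t. c / (1 - \<gamma>))) $ i = c" for i
    proof -
      have "((mat 1 - \<gamma> *\<^sub>R P) *v (\<chi> t. c / (1 - \<gamma>))) $ i
          = c / (1 - \<gamma>) - \<gamma> * (\<Sum>t\<in>UNIV. P$i$t * (c / (1 - \<gamma>)))"
        by (simp only: IP_apply vec_lambda_beta)
      also have "\<dots> = c / (1 - \<gamma>) - \<gamma> * (c / (1 - \<gamma>))" by (simp only: hh)
      also have "\<dots> = (1 - \<gamma>) * (c / (1 - \<gamma>))" by (simp only: left_diff_distrib mult_1)
      also have "\<dots> = c" using g by simp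
      finally show ?thesis .
    qed
    then show ?thesis by (simp add: vec_eq_iff)
  qed
  then show ?thesis using IP_inv1(2)[OF P g, of "\<chi> t. c / (1 - \<gamma>)"] by simp
qed

lemma M_entry:
  fixes P :: "real^'s::finite^'s"
  assumes P: "stoch P" and g: "0 \<le> \<gamma>" "\<gamma> < 1"
  shows "0 \<le> matrix_inv (mat 1 - \<gamma> *\<^sub>R P) $ s $ t"
    and "(\<Sum>t\<in>UNIV. matrix_inv (mat 1 - \<gamma> *\<^sub>R P) $ s $ t) = 1 / (1 - \<gamma>)"
proof -
  show "0 \<le> matrix_inv (mat 1 - \<gamma> *\<^sub>R P) $ s $ t"
    using M_pos[OF P g, of "axis t 1" s]
    by (simp add: matrix_vector_mult_def axis_def if_distrib cong: if_cong)
  show "(\<Sum>t\<in>UNIV. matrix_inv (mat 1 - \<gamma> *\<^sub>R P) $ s $ t) = 1 / (1 - \<gamma>)"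
    using arg_cong[OF M_const[OF P g, of 1], of "\<lambda>v. v $ s"]
    by (simp add: matrix_vector_mult_def)
qed




lemma Pmat_stoch: "stoch (Pmat K \<sigma>)"
  unfolding stoch_def
proof safe
  fix s t show "0 \<le> Pmat K \<sigma> $ s $ t" by (simp add: Pmat_def)
next
  fix s
  have "(\<Sum>t\<in>UNIV. Pmat K \<sigma> $ s $ t)
      = measure_pmf.expectation (joint \<sigma> s) (\<lambda>a. \<Sum>t\<in>UNIV. pmf (K s a) t)"
  proof -
    have "(\<Sum>t\<in>UNIV. Pmat K \<sigma> $ s $ t) = (\<Sum>t\<in>UNIV. measure_pmf.expectation (joint \<sigma> s) (\<lambda>a. pmf (K s a) t))"
      by (simp add: Pmat_def)
    also have "\<dots> = measure_pmf.expectation (joint \<sigma> s) (\<lambda>a. \<Sum>t\<in>UNIV. pmf (K s a) t)"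
      by (rule Bochner_Integration.integral_sum[where I=UNIV and M="measure_pmf (joint \<sigma> s)" and f="\<lambda>t a. pmf (K s a) t", symmetric])
         (auto intro!: measure_pmf.integrable_const_bound[where B=1] simp: pmf_le_1)
    finally show ?thesis .
  qed
  also have "\<dots> = 1" by (simp add: sum_pmf_eq_1)
  finally show "(\<Sum>t\<in>UNIV. Pmat K \<sigma> $ s $ t) = 1" .
qed

lemma joint_fin:
  assumes "\<And>j. finite (set_pmf (\<sigma> j s))"
  shows "finite (set_pmf (joint \<sigma> s))"
proof -
  have "set_pmf (joint \<sigma> s) \<subseteq> PiE_dflt UNIV undefined (set_pmf \<circ> (\<lambda>j. \<sigma> j s))"
    unfolding joint_def by (rule set_Pi_pmf_subset') simp
  moreover have "finite (PiE_dflt UNIV undefined (set_pmf \<circ> (\<lambda>j. \<sigma> j s)))"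
    using assms by (intro finite_PiE_dflt) auto
  ultimately show ?thesis by (rule finite_subset)
qed

lemma joint_set:
  "set_pmf (joint \<sigma> s) = {f. \<forall>j. f j \<in> set_pmf (\<sigma> j s)}"
  unfolding joint_def by (subst set_Pi_pmf) (auto simp: PiE_dflt_def)

lemma exp_lin:
  fixes D :: "'b pmf" and w :: "'s::finite \<Rightarrow> real"
  assumes "finite (set_pmf D)"
  shows "measure_pmf.expectation D (\<lambda>b. r b + \<gamma> * (\<Sum>t\<in>UNIV. pmf (K b) t * w t))
       = measure_pmf.expectation D r + \<gamma> * (\<Sum>t\<in>UNIV. measure_pmf.expectation D (\<lambda>b. pmf (K b) t) * w t)"
  using assms
  by (simp add: integrable_measure_pmf_finite integral_add Bochner_Integration.integral_sum)

lemma joint_upd: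
  "joint (\<sigma>(i := \<tau>)) s = map_pmf (\<lambda>(y,f). f(i:=y))
      (pair_pmf (\<tau> s) (Pi_pmf (UNIV - {i}) undefined (\<lambda>j. \<sigma> j s)))"
proof -
  have "joint (\<sigma>(i := \<tau>)) s = Pi_pmf (insert i (UNIV - {i})) undefined (\<lambda>j. (\<sigma>(i := \<tau>)) j s)"
    unfolding joint_def by (simp add: insert_absorb)
  also have "\<dots> = map_pmf (\<lambda>(y,f). f(i:=y))
      (pair_pmf (\<tau> s) (Pi_pmf (UNIV - {i}) undefined (\<lambda>j. (\<sigma>(i := \<tau>)) j s)))"
    by (subst Pi_pmf_insert) auto
  also have "Pi_pmf (UNIV - {i}) undefined (\<lambda>j. (\<sigma>(i := \<tau>)) j s) = Pi_pmf (UNIV - {i}) undefined (\<lambda>j. \<sigma> j s)"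
    by (rule Pi_pmf_cong) auto
  finally show ?thesis .
qed

lemma decomp:
  fixes \<sigma> :: "'p::finite \<Rightarrow> 's \<Rightarrow> 'a pmf"
  assumes fin: "finite (set_pmf (\<tau> s))" "\<And>j. finite (set_pmf (\<sigma> j s))"
  shows "measure_pmf.expectation (joint (\<sigma>(i := \<tau>)) s) F
       = (\<Sum>y\<in>set_pmf (\<tau> s). pmf (\<tau> s) y * measure_pmf.expectation (joint (\<sigma>(i := (\<lambda>_. return_pmf y))) s) F)"
proof -
  define Q where "Q = Pi_pmf (UNIV - {i}) undefined (\<lambda>j. \<sigma> j s)"
  have finQ: "finite (set_pmf Q)"
  proof -
    have "set_pmf Q \<subseteq> PiE_dflt (UNIV - {i}) undefined (set_pmf \<circ> (\<lambda>j. \<sigma> j s))"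
      unfolding Q_def by (rule set_Pi_pmf_subset') simp
    moreover have "finite (PiE_dflt (UNIV - {i}) undefined (set_pmf \<circ> (\<lambda>j. \<sigma> j s)))"
      using fin by (intro finite_PiE_dflt) auto
    ultimately show ?thesis by (rule finite_subset)
  qed
  have 1: "measure_pmf.expectation (joint (\<sigma>(i := (\<lambda>_. return_pmf y))) s) F
      = measure_pmf.expectation Q (\<lambda>f. F (f(i:=y)))" for y
    unfolding joint_upd Q_def[symmetric] by (simp add: pair_return_pmf1)
  have "measure_pmf.expectation (joint (\<sigma>(i := \<tau>)) s) F
      = measure_pmf.expectation (pair_pmf (\<tau> s) Q) (\<lambda>(y,f). F (f(i:=y)))"
    unfolding joint_upd Q_def[symmetric] by (simp add: case_prod_beta')
  also have "\<dots> = (\<Sum>x\<in>set_pmf (\<tau> s) \<times> set_pmf Q. (\<lambda>(y,f). F (f(i:=y))) x * pmf (pair_pmf (\<tau> s) Q) x)"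
    by (rule integral_measure_pmf_real) (use fin finQ in auto)
  also have "\<dots> = (\<Sum>x\<in>set_pmf (\<tau> s) \<times> set_pmf Q. F ((snd x)(i:=fst x)) * (pmf (\<tau> s) (fst x) * pmf Q (snd x)))"
    by (intro sum.cong refl) (auto simp: pmf_pair)
  also have "\<dots> = (\<Sum>y\<in>set_pmf (\<tau> s). \<Sum>f\<in>set_pmf Q. F (f(i:=y)) * (pmf (\<tau> s) y * pmf Q f))"
    by (simp add: sum.cartesian_product split_def)
  also have "\<dots> = (\<Sum>y\<in>set_pmf (\<tau> s). pmf (\<tau> s) y * (\<Sum>f\<in>set_pmf Q. F (f(i:=y)) * pmf Q f))"
    by (simp add: sum_distrib_left mult_ac)
  also have "\<dots> = (\<Sum>y\<in>set_pmf (\<tau> s). pmf (\<tau> s) y * measure_pmf.expectation Q (\<lambda>f. F (f(i:=y))))"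
    by (subst integral_measure_pmf_real[where A="set_pmf Q"]) (use finQ in auto)
  finally show ?thesis by (simp add: 1)
qed




lemma powr_convex0:
  assumes p: "p \<ge> 1"
  shows "convex_on {0..} (\<lambda>x::real. x powr p)"
proof (rule convex_onI)
  show "convex {0::real..}" by simp
  fix t x y :: real assume t: "0 < t" "t < 1" and xy: "x \<in> {0..}" "y \<in> {0..}"
  have tp: "t powr p \<le> t" using t p by (intro powr_le_one_le) auto
  have tp': "(1 - t) powr p \<le> 1 - t" using t p by (intro powr_le_one_le) auto
  show "((1 - t) *\<^sub>R x + t *\<^sub>R y) powr p \<le> (1 - t) * x powr p + t * y powr p"
  proof (cases "x = 0")
    case True
    then show ?thesis using t xy tp p
      by (simp add: powr_mult mult_right_mono)
  next
    case x: False
    show ?thesis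
    proof (cases "y = 0")
      case True
      then show ?thesis using t xy tp' p
        by (simp add: powr_mult mult_right_mono)
    next
      case False
      then show ?thesis using x xy t convex_onD[OF powr_convex[OF p], of t x y] by auto
    qed
  qed
qed

lemma jensen_conc:
  fixes P :: "real^'s::finite^'s" and \<mu> \<nu> :: "'s pmf"
  assumes P: "stoch P" and g: "0 \<le> \<gamma>" "\<gamma> < 1" and p: "p \<ge> 1"
    and a: "\<And>t. 0 \<le> a $ t" and nu: "\<And>s. pmf \<nu> s > 0"
  defines "M \<equiv> matrix_inv (mat 1 - \<gamma> *\<^sub>R P)"
  defines "C \<equiv> Max (range (\<lambda>s. (((1 - \<gamma>) *\<^sub>R ((\<chi> t. pmf \<mu> t) v* M)) $ s) / pmf \<nu> s))"
  shows "(\<Sum>s\<in>UNIV. pmf \<mu> s * ((1 - \<gamma>) * (M *v a) $ s) powr p) \<le> C * (\<Sum>t\<in>UNIV. pmf \<nu> t * a $ t powr p)"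
    and "C > 0"
proof -
  define d where "d t = (1 - \<gamma>) * (\<Sum>s\<in>UNIV. pmf \<mu> s * M $ s $ t)" for t
  have dC: "d t \<le> C * pmf \<nu> t" for t
  proof -
    have "d t / pmf \<nu> t \<le> C" unfolding C_def
      by (rule Max_ge) (auto simp: d_def vector_matrix_mult_def)
    then show ?thesis using nu[of t] by (simp add: divide_le_eq)
  qed
  have Ment: "0 \<le> M $ s $ t" "(\<Sum>t\<in>UNIV. M $ s $ t) = 1 / (1 - \<gamma>)" for s t
    unfolding M_def using M_entry[OF P g] by auto
  have jen: "((1 - \<gamma>) * (M *v a) $ s) powr p \<le> (\<Sum>t\<in>UNIV. ((1 - \<gamma>) * M $ s $ t) * a $ t powr p)" for s
  proof -
    have "(1 - \<gamma>) * (M *v a) $ s = (\<Sum>t\<in>UNIV. ((1 - \<gamma>) * M $ s $ t) *\<^sub>R a $ t)"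
      by (simp add: matrix_vector_mult_def sum_distrib_left mult_ac)
    moreover have "(\<Sum>t\<in>UNIV. ((1 - \<gamma>) * M $ s $ t) *\<^sub>R a $ t) powr p \<le> (\<Sum>t\<in>UNIV. ((1 - \<gamma>) * M $ s $ t) * a $ t powr p)"
    proof (rule convex_on_sum[OF _ _ powr_convex0[OF p]])
      show "(\<Sum>t\<in>UNIV. (1 - \<gamma>) * M $ s $ t) = 1"
        using Ment(2)[of s] g by (simp add: sum_distrib_left[symmetric])
    qed (use Ment(1) g a in auto)
    ultimately show ?thesis by simp
  qed
  have "(\<Sum>s\<in>UNIV. pmf \<mu> s * ((1 - \<gamma>) * (M *v a) $ s) powr p)
      \<le> (\<Sum>s\<in>UNIV. pmf \<mu> s * (\<Sum>t\<in>UNIV. ((1 - \<gamma>) * M $ s $ t) * a $ t powr p))"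
    by (intro sum_mono mult_left_mono jen) auto
  also have "\<dots> = (\<Sum>s\<in>UNIV. \<Sum>t\<in>UNIV. pmf \<mu> s * (((1 - \<gamma>) * M $ s $ t) * a $ t powr p))"
    by (simp only: sum_distrib_left)
  also have "\<dots> = (\<Sum>t\<in>UNIV. \<Sum>s\<in>UNIV. pmf \<mu> s * (((1 - \<gamma>) * M $ s $ t) * a $ t powr p))"
    by (rule sum.swap)
  also have "\<dots> = (\<Sum>t\<in>UNIV. d t * a $ t powr p)"
    unfolding d_def by (simp add: sum_distrib_left sum_distrib_right mult_ac)
  also have "\<dots> \<le> (\<Sum>t\<in>UNIV. C * pmf \<nu> t * a $ t powr p)"
    by (intro sum_mono mult_right_mono dC) auto
  also have "\<dots> = C * (\<Sum>t\<in>UNIV. pmf \<nu> t * a $ t powr p)"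
    by (simp add: sum_distrib_left mult_ac)
  finally show "(\<Sum>s\<in>UNIV. pmf \<mu> s * ((1 - \<gamma>) * (M *v a) $ s) powr p) \<le> C * (\<Sum>t\<in>UNIV. pmf \<nu> t * a $ t powr p)" .
  show "C > 0"
  proof (rule ccontr)
    assume "\<not> C > 0"
    then have "d t \<le> 0" for t using dC[of t] nu[of t] mult_nonpos_nonneg[of C "pmf \<nu> t"] by linarith
    then have "(\<Sum>t\<in>UNIV. d t) \<le> 0" by (simp add: sum_nonpos)
    moreover have "(\<Sum>t\<in>UNIV. d t) = 1"
    proof -
      have "(\<Sum>t\<in>UNIV. d t) = (1 - \<gamma>) * (\<Sum>s\<in>UNIV. pmf \<mu> s * (\<Sum>t\<in>UNIV. M $ s $ t))"
      proof -
        have "(\<Sum>t\<in>UNIV. d t) = (1 - \<gamma>) * (\<Sum>t\<in>UNIV. \<Sum>s\<in>UNIV. pmf \<mu> s * M $ s $ t)"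
          unfolding d_def by (simp only: sum_distrib_left)
        also have "(\<Sum>t\<in>UNIV. \<Sum>s\<in>UNIV. pmf \<mu> s * M $ s $ t) = (\<Sum>s\<in>UNIV. \<Sum>t\<in>UNIV. pmf \<mu> s * M $ s $ t)"
          by (rule sum.swap)
        finally show ?thesis by (simp only: sum_distrib_left)
      qed
      also have "\<dots> = (\<Sum>s\<in>UNIV. pmf \<mu> s)" using g by (simp add: Ment(2) sum_divide_distrib[symmetric])
      also have "\<dots> = 1" by (simp add: sum_pmf_eq_1)
      finally show ?thesis .
    qed
    ultimately show False by simp
  qed
qed




lemma val_diff:
  assumes g: "0 \<le> \<gamma>" "\<gamma> < 1"
  shows "val K r \<gamma> i \<sigma> - v = matrix_inv (mat 1 - \<gamma> *\<^sub>R Pmat K \<sigma>) *v (T_op K r \<gamma> i \<sigma> v - v)"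
proof -
  note P = Pmat_stoch[of K \<sigma>]
  have "(mat 1 - \<gamma> *\<^sub>R Pmat K \<sigma>) *v val K r \<gamma> i \<sigma> = rvec r i \<sigma>"
    unfolding val_def by (rule IP_inv1(1)[OF P g])
  then have "(mat 1 - \<gamma> *\<^sub>R Pmat K \<sigma>) *v (val K r \<gamma> i \<sigma> - v) = T_op K r \<gamma> i \<sigma> v - v"
    by (simp add: matrix_vector_mult_diff_distrib vec_eq_iff IP_apply T_op_def)
  then show ?thesis using IP_inv1(2)[OF P g, of "val K r \<gamma> i \<sigma> - v"] by simp
qed

lemma T_exp:
  assumes "\<And>j. finite (set_pmf (\<sigma> j s))"
  shows "T_op K r \<gamma> i \<sigma> v $ s = measure_pmf.expectation (joint \<sigma> s)
           (\<lambda>b. r i s b + \<gamma> * (\<Sum>t\<in>UNIV. pmf (K s b) t * v $ t))"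
  unfolding T_op_def
  using exp_lin[OF joint_fin[of \<sigma> s, OF assms], of "r i s" \<gamma> "K s" "\<lambda>t. v$t"]
  by (simp add: rvec_def Pmat_def)

lemma Ts_exp:
  assumes "\<And>j. finite (set_pmf (\<sigma> j s))"
  shows "r_mi r i \<sigma> s a + \<gamma> * (\<Sum>t\<in>UNIV. P_mi K i \<sigma> s a t * v $ t)
       = measure_pmf.expectation (joint (\<sigma>(i := (\<lambda>_. return_pmf a))) s)
           (\<lambda>b. r i s b + \<gamma> * (\<Sum>t\<in>UNIV. pmf (K s b) t * v $ t))"
proof -
  have "finite (set_pmf ((\<sigma>(i := (\<lambda>_. return_pmf a))) j s))" for j
    using assms by (cases "j = i") auto
  then show ?thesis
    unfolding r_mi_def P_mi_def
    using exp_lin[OF joint_fin, of "\<sigma>(i := (\<lambda>_. return_pmf a))" s "r i s" \<gamma> "K s" "\<lambda>t. v$t"]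
    by simp
qed

lemma T_le:
  assumes fin: "\<And>j. finite (set_pmf (\<pi> j s))" and A_fin: "finite (A i s)"
    and sub: "set_pmf (\<pi>s s) \<subseteq> A i s"
  shows "T_op K r \<gamma> i (\<pi>(i := \<pi>s)) v $ s \<le> Tstar_op K r \<gamma> A i \<pi> v $ s"
proof -
  define F where "F b = r i s b + \<gamma> * (\<Sum>t\<in>UNIV. pmf (K s b) t * v $ t)" for b
  define \<phi> where "\<phi> a = r_mi r i \<pi> s a + \<gamma> * (\<Sum>t\<in>UNIV. P_mi K i \<pi> s a t * v $ t)" for a
  have finS: "finite (set_pmf (\<pi>s s))" using sub A_fin finite_subset by blast
  have fin': "finite (set_pmf ((\<pi>(i := \<pi>s)) j s))" for j
    using fin finS by (cases "j = i") auto
  have "T_op K r \<gamma> i (\<pi>(i := \<pi>s)) v $ s = measure_pmf.expectation (joint (\<pi>(i := \<pi>s)) s) F"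
    unfolding F_def by (rule T_exp[of "\<pi>(i := \<pi>s)" s, OF fin'])
  also have "\<dots> = (\<Sum>y\<in>set_pmf (\<pi>s s). pmf (\<pi>s s) y * \<phi> y)"
    unfolding decomp[where \<sigma>=\<pi> and \<tau>=\<pi>s and s=s and i=i, OF finS fin] \<phi>_def F_def Ts_exp[where \<sigma>=\<pi> and s=s, OF fin] ..
  also have "\<dots> \<le> (\<Sum>y\<in>set_pmf (\<pi>s s). pmf (\<pi>s s) y * Max (\<phi> ` A i s))"
    using sub A_fin by (intro sum_mono mult_left_mono Max_ge) auto
  also have "\<dots> = Max (\<phi> ` A i s)"
    using finS by (simp add: sum_distrib_right[symmetric] sum_pmf_eq_1)
  also have "\<dots> = Tstar_op K r \<gamma> A i \<pi> v $ s"
    unfolding Tstar_op_def \<phi>_def by simp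
  finally show ?thesis .
qed

lemma val_bound:
  fixes A :: "'p::finite \<Rightarrow> 's::finite \<Rightarrow> 'a set"
  assumes A_fin: "\<And>j s. finite (A j s)" and g: "0 \<le> \<gamma>" "\<gamma> < 1"
    and js: "joint_strategy A \<sigma>"
  shows "val K r \<gamma> i \<sigma> $ s \<le> (\<Sum>s\<in>UNIV. \<Sum>f\<in>{f. \<forall>j. f j \<in> A j s}. \<bar>r i s f\<bar>) / (1 - \<gamma>)"
proof -
  define Bd where "Bd = (\<Sum>s\<in>UNIV. \<Sum>f\<in>{f. \<forall>j. f j \<in> A j s}. \<bar>r i s f\<bar>)"
  have FS: "finite {f. \<forall>j. f j \<in> A j s}" for s
  proof -
    have "{f. \<forall>j. f j \<in> A j s} = PiE UNIV (\<lambda>j. A j s)" by (auto simp: PiE_def extensional_def)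
    then show ?thesis using A_fin by (simp add: finite_PiE)
  qed
  have sub: "set_pmf (\<sigma> j s) \<subseteq> A j s" for j s
    using js by (auto simp: joint_strategy_def strategy_def)
  have fin: "finite (set_pmf (\<sigma> j s))" for j s using sub A_fin finite_subset by blast
  have rb: "rvec r i \<sigma> $ s \<le> Bd" for s
  proof -
    have le: "r i s b \<le> Bd" if b: "b \<in> set_pmf (joint \<sigma> s)" for b
    proof -
      have bF: "b \<in> {f. \<forall>j. f j \<in> A j s}" using b sub by (auto simp: joint_set)
      have "r i s b \<le> \<bar>r i s b\<bar>" by simp
      also have "\<dots> \<le> (\<Sum>f\<in>{f. \<forall>j. f j \<in> A j s}. \<bar>r i s f\<bar>)"
        using FS bF by (intro member_le_sum) auto
      also have "\<dots> \<le> Bd" unfolding Bd_def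
        by (rule member_le_sum[where f="\<lambda>s. \<Sum>f\<in>{f. \<forall>j. f j \<in> A j s}. \<bar>r i s f\<bar>"])
           (auto intro: sum_nonneg)
      finally show ?thesis .
    qed
    have "rvec r i \<sigma> $ s = (\<Sum>b\<in>set_pmf (joint \<sigma> s). r i s b * pmf (joint \<sigma> s) b)"
      unfolding rvec_def by (simp, rule integral_measure_pmf_real) (use joint_fin[of \<sigma> s, OF fin] in auto)
    also have "\<dots> \<le> (\<Sum>b\<in>set_pmf (joint \<sigma> s). Bd * pmf (joint \<sigma> s) b)"
      by (intro sum_mono mult_right_mono le) auto
    also have "\<dots> = Bd"
      using joint_fin[of \<sigma> s, OF fin] by (simp add: sum_distrib_left[symmetric] sum_pmf_eq_1)
    finally show ?thesis .
  qed
  have "val K r \<gamma> i \<sigma> $ s \<le> (matrix_inv (mat 1 - \<gamma> *\<^sub>R Pmat K \<sigma>) *v (\<chi> t. Bd)) $ s"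
    unfolding val_def by (rule M_mono[OF Pmat_stoch g]) (simp add: rb)
  also have "\<dots> = Bd / (1 - \<gamma>)" by (simp add: M_const[OF Pmat_stoch g])
  finally show ?thesis unfolding Bd_def .
qed




lemma conv2:
  fixes G H l p :: real
  assumes l: "0 < l" "l < 1" and p: "p \<ge> 1" and G: "0 \<le> G" and H: "0 \<le> H"
  shows "(G + H) powr p \<le> l powr (1 - p) * G powr p + (1 - l) powr (1 - p) * H powr p"
proof -
  have e: "c * (x / c) powr p = c powr (1 - p) * x powr p" if "c > 0" for c x :: real
    using that by (simp add: powr_divide powr_diff field_simps)
  have "((1 - (1 - l)) *\<^sub>R (G / l) + (1 - l) *\<^sub>R (H / (1 - l))) powr p
      \<le> (1 - (1 - l)) * (G / l) powr p + (1 - l) * (H / (1 - l)) powr p"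
    using l G H by (intro convex_onD[OF powr_convex0[OF p]]) auto
  moreover have "(1 - (1 - l)) *\<^sub>R (G / l) + (1 - l) *\<^sub>R (H / (1 - l)) = G + H"
    using l by simp
  ultimately show ?thesis using e[of l G] e[of "1 - l" H] l by simp
qed

theorem lemma1:
  fixes A :: "'p::finite \<Rightarrow> 's::finite \<Rightarrow> 'a set"
    and r :: "'p \<Rightarrow> 's \<Rightarrow> ('p \<Rightarrow> 'a) \<Rightarrow> real"
    and K :: "'s \<Rightarrow> ('p \<Rightarrow> 'a) \<Rightarrow> 's pmf"
    and \<gamma> p p' :: real
    and \<mu> \<nu> :: "'s pmf"
    and \<pi> :: "'p \<Rightarrow> 's \<Rightarrow> 'a pmf"
    and i :: 'p
    and \<pi>s :: "'s \<Rightarrow> 'a pmf"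
    and v :: "real^'s"
  assumes A_fin: "\<And>j s. finite (A j s)"
    and A_ne: "\<And>j s. A j s \<noteq> {}"
    and gamma: "0 \<le> \<gamma>" "\<gamma> < 1"
    and p: "p > 1" "p' > 1" "1 / p + 1 / p' = 1"
    and nu_pos: "\<And>s. pmf \<nu> s > 0"
    and pi: "joint_strategy A \<pi>"
    and pis: "strategy A i \<pi>s"
    and best: "val K r \<gamma> i (\<pi>(i := \<pi>s)) = br_val K r \<gamma> A i \<pi>"
  shows "lpnorm \<mu> p (val K r \<gamma> i (\<pi>(i := \<pi>s)) - val K r \<gamma> i \<pi>)
    \<le> 1 / (1 - \<gamma>) *
       (conc K \<gamma> \<mu> \<nu> (\<pi>(i := \<pi>s)) powr (p' / p) + conc K \<gamma> \<mu> \<nu> \<pi> powr (p' / p)) powr (1 / p') *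
       ((lpnorm \<nu> p (Tstar_op K r \<gamma> A i \<pi> v - v)) powr p + (lpnorm \<nu> p (T_op K r \<gamma> i \<pi> v - v)) powr p) powr (1 / p)"
proof -
  define \<pi>' where "\<pi>' = \<pi>(i := \<pi>s)"
  define M1 where "M1 = matrix_inv (mat 1 - \<gamma> *\<^sub>R Pmat K \<pi>')"
  define M2 where "M2 = matrix_inv (mat 1 - \<gamma> *\<^sub>R Pmat K \<pi>)"
  define a where "a = (\<chi> s. \<bar>(Tstar_op K r \<gamma> A i \<pi> v - v) $ s\<bar>)"
  define b where "b = (\<chi> s. \<bar>(T_op K r \<gamma> i \<pi> v - v) $ s\<bar>)"
  define f where "f = val K r \<gamma> i \<pi>' - val K r \<gamma> i \<pi>"
  define C1 where "C1 = conc K \<gamma> \<mu> \<nu> \<pi>'"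
  define C2 where "C2 = conc K \<gamma> \<mu> \<nu> \<pi>"
  define X where "X = (\<Sum>t\<in>UNIV. pmf \<nu> t * a $ t powr p)"
  define Y where "Y = (\<Sum>t\<in>UNIV. pmf \<nu> t * b $ t powr p)"
  note P1 = Pmat_stoch[of K \<pi>'] and P2 = Pmat_stoch[of K \<pi>]
  have subpi: "set_pmf (\<pi> j s) \<subseteq> A j s" for j s
    using pi by (auto simp: joint_strategy_def strategy_def)
  have subpis: "set_pmf (\<pi>s s) \<subseteq> A i s" for s
    using pis by (auto simp: strategy_def)
  have finpi: "finite (set_pmf (\<pi> j s))" for j s using subpi A_fin finite_subset by blast
  have a0: "0 \<le> a $ t" and b0: "0 \<le> b $ t" for t by (auto simp: a_def b_def)
  have f0: "0 \<le> f $ s" for s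
  proof -
    have bdd: "bdd_above ((\<lambda>\<sigma>. val K r \<gamma> i (\<pi>(i := \<sigma>)) $ s) ` {\<sigma>. strategy A i \<sigma>})"
    proof (rule bdd_aboveI2)
      fix \<sigma> assume "\<sigma> \<in> {\<sigma>. strategy A i \<sigma>}"
      then have "joint_strategy A (\<pi>(i := \<sigma>))" using pi by (auto simp: joint_strategy_def)
      then show "val K r \<gamma> i (\<pi>(i := \<sigma>)) $ s
          \<le> (\<Sum>s\<in>UNIV. \<Sum>f\<in>{f. \<forall>j. f j \<in> A j s}. \<bar>r i s f\<bar>) / (1 - \<gamma>)"
        by (rule val_bound[OF A_fin gamma])
    qed
    have "strategy A i (\<pi> i)" using pi by (simp add: joint_strategy_def)
    then have "val K r \<gamma> i (\<pi>(i := \<pi> i)) $ s \<le> (SUP \<sigma>\<in>{\<sigma>. strategy A i \<sigma>}. val K r \<gamma> i (\<pi>(i := \<sigma>)) $ s)"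
      by (intro cSUP_upper[OF _ bdd]) simp
    then show ?thesis using best by (simp add: f_def \<pi>'_def br_val_def)
  qed
  have fgh: "f $ s \<le> (M1 *v a) $ s + (M2 *v b) $ s" for s
  proof -
    have e1: "val K r \<gamma> i \<pi>' - v = M1 *v (T_op K r \<gamma> i \<pi>' v - v)"
      unfolding M1_def by (rule val_diff[OF gamma])
    have e2: "val K r \<gamma> i \<pi> - v = M2 *v (T_op K r \<gamma> i \<pi> v - v)"
      unfolding M2_def by (rule val_diff[OF gamma])
    have "f = M1 *v (T_op K r \<gamma> i \<pi>' v - v) + M2 *v (v - T_op K r \<gamma> i \<pi> v)"
    proof -
      have "f = (val K r \<gamma> i \<pi>' - v) - (val K r \<gamma> i \<pi> - v)" by (simp add: f_def)
      also have "\<dots> = M1 *v (T_op K r \<gamma> i \<pi>' v - v) - M2 *v (T_op K r \<gamma> i \<pi> v - v)"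
        by (simp only: e1 e2)
      also have "M2 *v (T_op K r \<gamma> i \<pi> v - v) = - (M2 *v (v - T_op K r \<gamma> i \<pi> v))"
        by (simp add: matrix_vector_mult_diff_distrib)
      finally show ?thesis by simp
    qed
    moreover have "(M1 *v (T_op K r \<gamma> i \<pi>' v - v)) $ s \<le> (M1 *v a) $ s"
      unfolding M1_def
    proof (rule M_mono[OF P1 gamma])
      fix t
      have "T_op K r \<gamma> i \<pi>' v $ t \<le> Tstar_op K r \<gamma> A i \<pi> v $ t"
        unfolding \<pi>'_def using T_le[where \<pi>=\<pi> and s=t and A=A and i=i and \<pi>s=\<pi>s] finpi A_fin subpis by blast
      then show "(T_op K r \<gamma> i \<pi>' v - v) $ t \<le> a $ t" by (simp add: a_def)
    qed
    moreover have "(M2 *v (v - T_op K r \<gamma> i \<pi> v)) $ s \<le> (M2 *v b) $ s"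
      unfolding M2_def by (rule M_mono[OF P2 gamma]) (simp add: b_def)
    ultimately show ?thesis by simp
  qed
  have J1: "(\<Sum>s\<in>UNIV. pmf \<mu> s * ((1 - \<gamma>) * (M1 *v a) $ s) powr p) \<le> C1 * X" and C1: "C1 > 0"
    using jensen_conc[OF P1 gamma _ a0 nu_pos, of p \<mu>] p
    unfolding C1_def conc_def M1_def X_def by auto
  have J2: "(\<Sum>s\<in>UNIV. pmf \<mu> s * ((1 - \<gamma>) * (M2 *v b) $ s) powr p) \<le> C2 * Y" and C2: "C2 > 0"
    using jensen_conc[OF P2 gamma _ b0 nu_pos, of p \<mu>] p
    unfolding C2_def conc_def M2_def Y_def by auto
  have pp1: "p' * (p - 1) = p"
  proof -
    have "p' + p = p * p'" using p by (simp add: field_simps)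
    then show ?thesis by (simp add: algebra_simps)
  qed
  have pp: "p' / p * (p - 1) = 1" using pp1 p by (simp add: field_simps)
  have pq: "1 / p' = (p - 1) / p" using pp1 p by (simp add: field_simps)
  define c1 where "c1 = C1 powr (p' / p)"
  define c2 where "c2 = C2 powr (p' / p)"
  define S where "S = c1 + c2"
  define lam where "lam = c1 / S"
  have c1p: "c1 > 0" and c2p: "c2 > 0" using C1 C2 by (auto simp: c1_def c2_def)
  have Sp: "S > 0" using c1p c2p by (simp add: S_def)
  have lam: "0 < lam" "lam < 1" using c1p c2p Sp by (auto simp: lam_def S_def field_simps)
  have lam1: "1 - lam = c2 / S" using Sp by (simp add: lam_def S_def field_simps)
  have cC: "c powr (p - 1) = C" if "c = C powr (p' / p)" "C > 0" for c C
    using that pp by (simp add: powr_powr)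
  have keyl: "(c / S) powr (1 - p) * C = S powr (p - 1)" if "c = C powr (p' / p)" "C > 0" for c C
  proof -
    have c0: "c > 0" using that by simp
    have "(c / S) powr (1 - p) * C = (c powr (1 - p) * c powr (p - 1)) / S powr (1 - p)"
      using cC[OF that] by (simp add: powr_divide)
    also have "c powr (1 - p) * c powr (p - 1) = 1"
      using c0 by (simp add: powr_add[symmetric])
    also have "1 / S powr (1 - p) = S powr (p - 1)"
      using powr_minus[of S "1 - p"] by (simp add: divide_inverse)
    finally show ?thesis .
  qed
  have k1: "lam powr (1 - p) * C1 = S powr (p - 1)" unfolding lam_def by (rule keyl[OF c1_def C1])
  have k2: "(1 - lam) powr (1 - p) * C2 = S powr (p - 1)" unfolding lam1 by (rule keyl[OF c2_def C2])
  define G where "G s = (1 - \<gamma>) * (M1 *v a) $ s" for s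
  define H where "H s = (1 - \<gamma>) * (M2 *v b) $ s" for s
  have G0: "0 \<le> G s" and H0: "0 \<le> H s" for s
    using M_pos[OF P1 gamma a0] M_pos[OF P2 gamma b0] gamma
    by (auto simp: G_def H_def M1_def M2_def)
  have fGH: "\<bar>f $ s\<bar> powr p \<le> (G s + H s) powr p / (1 - \<gamma>) powr p" for s
  proof -
    have "\<bar>f $ s\<bar> \<le> (G s + H s) / (1 - \<gamma>)"
    proof -
      have e: "(G s + H s) / (1 - \<gamma>) = (M1 *v a) $ s + (M2 *v b) $ s"
        unfolding G_def H_def distrib_left[symmetric] using gamma by simp
      show ?thesis unfolding e using f0[of s] fgh[of s] by simp
    qed
    then have "\<bar>f $ s\<bar> powr p \<le> ((G s + H s) / (1 - \<gamma>)) powr p"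
      using p by (intro powr_mono2) auto
    then show ?thesis by (simp add: powr_divide)
  qed
  have conv: "(G s + H s) powr p \<le> lam powr (1 - p) * G s powr p + (1 - lam) powr (1 - p) * H s powr p" for s
    by (rule conv2[OF lam _ G0 H0]) (use p in auto)
  have "(\<Sum>s\<in>UNIV. pmf \<mu> s * \<bar>f $ s\<bar> powr p) \<le> (\<Sum>s\<in>UNIV. pmf \<mu> s * ((G s + H s) powr p / (1 - \<gamma>) powr p))"
    by (intro sum_mono mult_left_mono fGH) auto
  also have "\<dots> = (\<Sum>s\<in>UNIV. pmf \<mu> s * (G s + H s) powr p) / (1 - \<gamma>) powr p"
    by (simp add: sum_divide_distrib)
  also have "(\<Sum>s\<in>UNIV. pmf \<mu> s * (G s + H s) powr p)
      \<le> (\<Sum>s\<in>UNIV. pmf \<mu> s * (lam powr (1 - p) * G s powr p + (1 - lam) powr (1 - p) * H s powr p))"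
    by (intro sum_mono mult_left_mono conv) auto
  also have "\<dots> = lam powr (1 - p) * (\<Sum>s\<in>UNIV. pmf \<mu> s * G s powr p)
       + (1 - lam) powr (1 - p) * (\<Sum>s\<in>UNIV. pmf \<mu> s * H s powr p)"
    by (simp add: sum.distrib sum_distrib_left algebra_simps)
  also have "\<dots> \<le> lam powr (1 - p) * (C1 * X) + (1 - lam) powr (1 - p) * (C2 * Y)"
    using J1 J2 by (intro add_mono mult_left_mono) (auto simp: G_def H_def)
  also have "\<dots> = S powr (p - 1) * (X + Y)"
    by (simp only: mult.assoc[symmetric] k1 k2 distrib_left)
  finally have main: "(\<Sum>s\<in>UNIV. pmf \<mu> s * \<bar>f $ s\<bar> powr p) \<le> S powr (p - 1) * (X + Y) / (1 - \<gamma>) powr p"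
    using gamma by (simp add: divide_right_mono)
  have X0: "0 \<le> X" and Y0: "0 \<le> Y" by (auto simp: X_def Y_def intro!: sum_nonneg)
  have "lpnorm \<mu> p f \<le> (S powr (p - 1) * (X + Y) / (1 - \<gamma>) powr p) powr (1 / p)"
    unfolding lpnorm_def using p main by (intro powr_mono2) (auto intro!: sum_nonneg)
  also have "\<dots> = S powr ((p - 1) / p) * (X + Y) powr (1 / p) / (1 - \<gamma>)"
    using gamma p X0 Y0 Sp by (simp add: powr_divide powr_mult powr_powr)
  also have "\<dots> = 1 / (1 - \<gamma>) * S powr (1 / p') *
       ((lpnorm \<nu> p (Tstar_op K r \<gamma> A i \<pi> v - v)) powr p + (lpnorm \<nu> p (T_op K r \<gamma> i \<pi> v - v)) powr p) powr (1 / p)"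
  proof -
    have "lpnorm \<nu> p (Tstar_op K r \<gamma> A i \<pi> v - v) powr p = X"
      using X0 p by (simp add: lpnorm_def X_def a_def powr_powr)
    moreover have "lpnorm \<nu> p (T_op K r \<gamma> i \<pi> v - v) powr p = Y"
      using Y0 p by (simp add: lpnorm_def Y_def b_def powr_powr)
    ultimately show ?thesis using pq by simp
  qed
  finally show ?thesis by (simp add: f_def \<pi>'_def S_def c1_def c2_def C1_def C2_def)
qed


end
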